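(* If $\Gamma$ has a cyclic fractional polymorphism of arity $m>1$, then the lifted language $\Gamma'$ (defined below) also has a cyclic fractional polymorphism of arity $m$.
   Context: $\Gamma$ is a finite set of cost functions $f:D^n\to\mathbb Q\cup\{\infty\}$ over finite $D$; $\mathrm{dom} f=\{x: f(x)<\infty\}$, also viewed as the $\{0,\infty\}$-valued function that is $0$ on $\mathrm{dom} f$. Let $\mathcal I$ be a feasible instance of $\mathrm{VCSP}(\Gamma)$ with variables $V$, constraints $t\in T$ with $f_t\in\Gamma$ of arity $n_t$ on variables $v(t,1),\dots,v(t,n_t)$. $D_v$ is the set of values $\sigma(v)$ over feasible solutions $\sigma$ of $\mathcal I$; $D'_v=\{(v,a):a\in D_v\}$ and $D'=\bigcup_{v\in V}D'_v$. For $n$-ary $f$ over $D$ and $v_1,\dots,v_n\in V$, $f^{\langle v_1,\dots,v_n\rangle}$ on $(D')^n$ equals $f(\hat x)$ at $((v_1,\hat x_1),\dots,(v_n,\hat x_n))$ and $\infty$ elsewhere. $\Gamma'=\bigcup_{t\in T}\{f_t^{\langle v(t,1),\dots,v(t,n_t)\rangle},\mathrm{dom} f_t^{\langle v(t,1),\dots,v(t,n_t)\rangle}\}\cup\{u_{D'_v}:v\in V\}\cup\{=_{D'}\}$, where $u_{D'_v}$ is $0$ on $D'_v$ and $\infty$ elsewhere on $D'$, and $=_{D'}$ is the binary function that is $0$ on equal pairs and $\infty$ otherwise. An $m$-ary fractional polymorphism of a language over a domain $E$ is a probability distribution $\omega$ on operations $g:E^m\to E$ such that for each $f$ in the language and $x^1,\dots,x^m\in\mathrm{dom}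 f$, $\sum_g\omega(g)f(g(x^1,\dots,x^m))\le\frac1m\sum_i f(x^i)$ (componentwise application); it is cyclic if all operations in its support satisfy $g(x_1,\dots,x_m)=g(x_2,\dots,x_m,x_1)$. *)

theory Defs
  imports "HOL-Library.Extended_Real"
begin

text \<open>A cost function of arity n over a domain is represented as a pair (n, f) with
  f applied to lists of length n.\<close>

type_synonym ('a) costfun = "nat \<times> ('a list \<Rightarrow> ereal)"

definition tuples :: "'a set \<Rightarrow> nat \<Rightarrow> 'a list set" where
  "tuples E n = {x. length x = n \<and> set x \<subseteq> E}"

definition valid_costfun :: "'a set \<Rightarrow> 'a costfun \<Rightarrow> bool" where
  "valid_costfun D F \<longleftrightarrow> (\<forall>x \<in> tuples D (fst F).
     snd F x = \<infinity> \<or> (\<exists>q::rat. snd F x = ereal (of_rat q)))"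

definition valid_language :: "'a set \<Rightarrow> 'a costfun set \<Rightarrow> bool" where
  "valid_language D \<Gamma> \<longleftrightarrow> finite D \<and> finite \<Gamma> \<and> (\<forall>F\<in>\<Gamma>. valid_costfun D F)"

definition app_op :: "('a list \<Rightarrow> 'a) \<Rightarrow> nat \<Rightarrow> 'a list list \<Rightarrow> 'a list" where
  "app_op g n xs = map (\<lambda>j. g (map (\<lambda>x. x ! j) xs)) [0..<n]"

definition operation :: "'a set \<Rightarrow> nat \<Rightarrow> ('a list \<Rightarrow> 'a) \<Rightarrow> bool" where
  "operation E m g \<longleftrightarrow> (\<forall>x \<in> tuples E m. g x \<in> E)"

definition supp_w :: "(('a list \<Rightarrow> 'a) \<Rightarrow> real) \<Rightarrow> ('a list \<Rightarrow> 'a) set" where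
  "supp_w \<omega> = {g. \<omega> g \<noteq> 0}"

definition fractional_polymorphism ::
  "'a set \<Rightarrow> 'a costfun set \<Rightarrow> nat \<Rightarrow> (('a list \<Rightarrow> 'a) \<Rightarrow> real) \<Rightarrow> bool" where
  "fractional_polymorphism E \<Gamma> m \<omega> \<longleftrightarrow>
     finite (supp_w \<omega>) \<and> (\<forall>g. \<omega> g \<ge> 0) \<and> sum \<omega> (supp_w \<omega>) = 1 \<and>
     (\<forall>g \<in> supp_w \<omega>. operation E m g) \<and>
     (\<forall>F \<in> \<Gamma>. \<forall>xs. length xs = m \<and> (\<forall>x \<in> set xs. x \<in> tuples E (fst F) \<and> snd F x < \<infinity>) \<longrightarrow>
        (\<Sum>g \<in> supp_w \<omega>. ereal (\<omega> g) * snd F (app_op g (fst F) xs))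
          \<le> ereal (1 / real m) * sum_list (map (snd F) xs))"

definition cyclic_fp :: "'a set \<Rightarrow> nat \<Rightarrow> (('a list \<Rightarrow> 'a) \<Rightarrow> real) \<Rightarrow> bool" where
  "cyclic_fp E m \<omega> \<longleftrightarrow> (\<forall>g \<in> supp_w \<omega>. \<forall>x \<in> tuples E m. g x = g (rotate1 x))"

definition vcsp_instance :: "'a set \<Rightarrow> 'a costfun set \<Rightarrow> 'v set \<Rightarrow> 't set \<Rightarrow>
    ('t \<Rightarrow> 'a costfun) \<Rightarrow> ('t \<Rightarrow> 'v list) \<Rightarrow> bool" where
  "vcsp_instance D \<Gamma> V T c sc \<longleftrightarrow> finite V \<and> finite T \<and>
     (\<forall>t\<in>T. c t \<in> \<Gamma> \<and> length (sc t) = fst (c t) \<and> set (sc t) \<subseteq> V)"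

definition objective :: "'t set \<Rightarrow> ('t \<Rightarrow> 'a costfun) \<Rightarrow> ('t \<Rightarrow> 'v list) \<Rightarrow> ('v \<Rightarrow> 'a) \<Rightarrow> ereal" where
  "objective T c sc \<sigma> = (\<Sum>t\<in>T. snd (c t) (map \<sigma> (sc t)))"

definition feasible_sol :: "'a set \<Rightarrow> 'v set \<Rightarrow> 't set \<Rightarrow> ('t \<Rightarrow> 'a costfun) \<Rightarrow> ('t \<Rightarrow> 'v list)
    \<Rightarrow> ('v \<Rightarrow> 'a) \<Rightarrow> bool" where
  "feasible_sol D V T c sc \<sigma> \<longleftrightarrow> \<sigma> ` V \<subseteq> D \<and> objective T c sc \<sigma> < \<infinity>"

definition feasible_instance where
  "feasible_instance D V T c sc \<longleftrightarrow> (\<exists>\<sigma>. feasible_sol D V T c sc \<sigma>)"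

definition Dv :: "'a set \<Rightarrow> 'v set \<Rightarrow> 't set \<Rightarrow> ('t \<Rightarrow> 'a costfun) \<Rightarrow> ('t \<Rightarrow> 'v list) \<Rightarrow> 'v \<Rightarrow> 'a set" where
  "Dv D V T c sc v = {\<sigma> v | \<sigma>. feasible_sol D V T c sc \<sigma>}"

definition Dv' where
  "Dv' D V T c sc v = {(v, a) | a. a \<in> Dv D V T c sc v}"

definition D' where
  "D' D V T c sc = (\<Union>v\<in>V. Dv' D V T c sc v)"

definition lift_fun :: "('a list \<Rightarrow> ereal) \<Rightarrow> 'v list \<Rightarrow> ('v \<times> 'a) list \<Rightarrow> ereal" where
  "lift_fun f vs ys = (if map fst ys = vs then f (map snd ys) else \<infinity>)"

definition dom_fun :: "('b list \<Rightarrow> ereal) \<Rightarrow> 'b list \<Rightarrow> ereal" where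
  "dom_fun f ys = (if f ys < \<infinity> then 0 else \<infinity>)"

definition unary_fun :: "'b set \<Rightarrow> 'b list \<Rightarrow> ereal" where
  "unary_fun S ys = (if (\<exists>y. ys = [y] \<and> y \<in> S) then 0 else \<infinity>)"

definition eq_fun :: "'b list \<Rightarrow> ereal" where
  "eq_fun ys = (if length ys = 2 \<and> ys ! 0 = ys ! 1 then 0 else \<infinity>)"

definition lifted_language :: "'a set \<Rightarrow> 'v set \<Rightarrow> 't set \<Rightarrow> ('t \<Rightarrow> 'a costfun) \<Rightarrow> ('t \<Rightarrow> 'v list)
    \<Rightarrow> ('v \<times> 'a) costfun set" where
  "lifted_language D V T c sc =
     (\<Union>t\<in>T. {(fst (c t), lift_fun (snd (c t)) (sc t)),
              (fst (c t), dom_fun (lift_fun (snd (c t)) (sc t)))})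
     \<union> {(1, unary_fun (Dv' D V T c sc v)) | v. v \<in> V}
     \<union> {(2, eq_fun)}"

end

theory Submission
  imports Defs
begin

definition liftop :: "('v \<times> 'a) \<Rightarrow> ('a list \<Rightarrow> 'a) \<Rightarrow> ('v \<times> 'a) list \<Rightarrow> ('v \<times> 'a)" where
  "liftop z g ys = (if ys \<noteq> [] \<and> (\<forall>y\<in>set ys. \<forall>y'\<in>set ys. fst y = fst y')
     then (fst (hd ys), g (map snd ys)) else z)"

lemma app_op_length[simp]: "length (app_op g n xs) = n"
  by (simp add: app_op_def)

lemma app_op_nth: "j < n \<Longrightarrow> app_op g n xs ! j = g (map (\<lambda>x. x ! j) xs)"
  by (simp add: app_op_def)

lemma sum_list_not_inf:
  fixes l :: "ereal list"
  shows "\<forall>a\<in>set l. a \<noteq> \<infinity> \<Longrightarrow> sum_list l \<noteq> \<infinity>"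
  by (induction l) auto

lemma fp_finite:
  assumes fp: "fractional_polymorphism D \<Gamma> m \<omega>" and F: "F \<in> \<Gamma>"
    and g: "g \<in> supp_w \<omega>" and len: "length xs = m" and m: "m > 0"
    and xs: "\<forall>x\<in>set xs. x \<in> tuples D (fst F) \<and> snd F x < \<infinity>"
  shows "snd F (app_op g (fst F) xs) < \<infinity>"
proof (rule ccontr)
  assume "\<not> ?thesis"
  hence inf: "snd F (app_op g (fst F) xs) = \<infinity>" by simp
  have fin: "finite (supp_w \<omega>)" and pos: "\<omega> g > 0"
    using fp g unfolding fractional_polymorphism_def supp_w_def
    by (auto simp: order_le_less)
  have le: "(\<Sum>g \<in> supp_w \<omega>. ereal (\<omega> g) * snd F (app_op g (fst F) xs))
          \<le> ereal (1 / real m) * sum_list (map (snd F) xs)"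
    using fp F len xs unfolding fractional_polymorphism_def by blast
  have "(\<Sum>g \<in> supp_w \<omega>. ereal (\<omega> g) * snd F (app_op g (fst F) xs)) = \<infinity>"
    unfolding sum_Pinfty using fin g inf pos by auto
  moreover have "sum_list (map (snd F) xs) \<noteq> \<infinity>"
    by (rule sum_list_not_inf) (use xs in auto)
  hence "ereal (1 / real m) * sum_list (map (snd F) xs) \<noteq> \<infinity>"
    using m by (cases "sum_list (map (snd F) xs)") auto
  ultimately show False using le by simp
qed

lemma push_sum:
  assumes fin: "finite S"
    and psi: "\<forall>g\<in>S. \<bar>\<psi> (L g)\<bar> \<noteq> \<infinity>"
  shows "(\<Sum>h\<in>L ` S. ereal (sum \<omega> {g\<in>S. L g = h}) * \<psi> h)
       = (\<Sum>g\<in>S. ereal (\<omega> g) * \<psi> (L g))"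
proof -
  define r where "r h = real_of_ereal (\<psi> h)" for h
  have e: "\<psi> (L g) = ereal (r (L g))" if "g \<in> S" for g
    using psi that unfolding r_def by (simp add: ereal_real')
  have "(\<Sum>h\<in>L ` S. ereal (sum \<omega> {g\<in>S. L g = h}) * \<psi> h)
      = (\<Sum>h\<in>L ` S. ereal (sum \<omega> {g\<in>S. L g = h} * r h))"
    by (rule sum.cong) (auto simp: e)
  also have "\<dots> = ereal (\<Sum>h\<in>L ` S. sum \<omega> {g\<in>S. L g = h} * r h)" by simp
  also have "(\<Sum>h\<in>L ` S. sum \<omega> {g\<in>S. L g = h} * r h) = (\<Sum>h\<in>L ` S. \<Sum>g\<in>{g\<in>S. L g = h}. \<omega> g * r (L g))"
    by (rule sum.cong) (auto simp: sum_distrib_right)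
  also have "\<dots> = (\<Sum>g\<in>S. \<omega> g * r (L g))"
    using sum.image_gen[OF fin, of "\<lambda>g. \<omega> g * r (L g)" L] by simp
  also have "ereal \<dots> = (\<Sum>g\<in>S. ereal (\<omega> g) * \<psi> (L g))"
    by (simp add: e)
  finally show ?thesis .
qed

lemma D'_mem: "p \<in> D' D V T c sc \<longleftrightarrow> fst p \<in> V \<and> snd p \<in> Dv D V T c sc (fst p)"
  by (cases p) (auto simp: D'_def Dv'_def)

lemma Dv_sub: "v \<in> V \<Longrightarrow> Dv D V T c sc v \<subseteq> D"
  by (auto simp: Dv_def feasible_sol_def)

lemma objective_fin:
  assumes "finite T"
  shows "objective T c sc \<sigma> < \<infinity> \<longleftrightarrow> (\<forall>t\<in>T. snd (c t) (map \<sigma> (sc t)) \<noteq> \<infinity>)"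
  using assms unfolding objective_def by (simp add: less_top[symmetric] sum_Pinfty)

lemma closure_Dv:
  assumes fp: "fractional_polymorphism D \<Gamma> m \<omega>" and g: "g \<in> supp_w \<omega>"
    and inst: "vcsp_instance D \<Gamma> V T c sc" and m: "m > 0"
    and v: "v \<in> V" and len: "length as = m" and as: "set as \<subseteq> Dv D V T c sc v"
  shows "g as \<in> Dv D V T c sc v"
proof -
  have "\<forall>i<m. \<exists>\<sigma>. feasible_sol D V T c sc \<sigma> \<and> \<sigma> v = as ! i"
  proof (intro allI impI)
    fix i assume "i < m"
    hence "as ! i \<in> Dv D V T c sc v" using as len nth_mem by blast
    thus "\<exists>\<sigma>. feasible_sol D V T c sc \<sigma> \<and> \<sigma> v = as ! i" unfolding Dv_def by auto
  qed
  then obtain S where S: "\<And>i. i < m \<Longrightarrow> feasible_sol D V T c sc (S i) \<and> S i v = as ! i"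
    by metis
  define \<sigma> where "\<sigma> u = g (map (\<lambda>i. S i u) [0..<m])" for u
  have op: "operation D m g" using fp g unfolding fractional_polymorphism_def by blast
  have finT: "finite T" using inst unfolding vcsp_instance_def by blast
  have SV: "\<And>i u. i < m \<Longrightarrow> u \<in> V \<Longrightarrow> S i u \<in> D"
    using S unfolding feasible_sol_def by blast
  have "\<sigma> ` V \<subseteq> D"
  proof
    fix y assume "y \<in> \<sigma> ` V"
    then obtain u where u: "u \<in> V" "y = \<sigma> u" by blast
    have "map (\<lambda>i. S i u) [0..<m] \<in> tuples D m"
      using SV u unfolding tuples_def by auto
    thus "y \<in> D" using op u unfolding operation_def \<sigma>_def by blast
  qed
  moreover have "\<forall>t\<in>T. snd (c t) (map \<sigma> (sc t)) \<noteq> \<infinity>"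
  proof
    fix t assume t: "t \<in> T"
    have ct: "c t \<in> \<Gamma>" "length (sc t) = fst (c t)" "set (sc t) \<subseteq> V"
      using inst t unfolding vcsp_instance_def by auto
    define xs where "xs = map (\<lambda>i. map (S i) (sc t)) [0..<m]"
    have fin_i: "snd (c t) (map (S i) (sc t)) \<noteq> \<infinity>" if "i < m" for i
      using S[OF that] finT t unfolding feasible_sol_def objective_fin[OF finT] by blast
    have "snd (c t) (app_op g (fst (c t)) xs) < \<infinity>"
    proof (rule fp_finite[OF fp ct(1) g _ m])
      show "length xs = m" by (simp add: xs_def)
      show "\<forall>x\<in>set xs. x \<in> tuples D (fst (c t)) \<and> snd (c t) x < \<infinity>"
        using fin_i SV ct unfolding xs_def tuples_def by (auto simp: less_top)
    qed
    moreover have "app_op g (fst (c t)) xs = map \<sigma> (sc t)"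
      by (rule nth_equalityI) (auto simp: ct(2)[symmetric] app_op_nth xs_def \<sigma>_def o_def)
    ultimately show "snd (c t) (map \<sigma> (sc t)) \<noteq> \<infinity>" by simp
  qed
  ultimately have "feasible_sol D V T c sc \<sigma>"
    unfolding feasible_sol_def objective_fin[OF finT] by blast
  moreover have "\<sigma> v = g as"
  proof -
    have "map (\<lambda>i. S i v) [0..<m] = as"
      by (rule nth_equalityI) (auto simp: len S)
    thus ?thesis by (simp add: \<sigma>_def)
  qed
  ultimately show ?thesis unfolding Dv_def mem_Collect_eq by (intro exI[of _ \<sigma>]) simp
qed

lemma lift_col:
  assumes xs: "\<forall>x\<in>set xs. map fst x = vs" and n: "length vs = n" and ne: "xs \<noteq> []"
  shows "app_op (liftop z g) n xs = zip vs (app_op g n (map (map snd) xs))"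
proof (rule nth_equalityI)
  show "length (app_op (liftop z g) n xs) = length (zip vs (app_op g n (map (map snd) xs)))"
    using n by simp
next
  fix j assume "j < length (app_op (liftop z g) n xs)"
  hence j: "j < n" by simp
  define col where "col = map (\<lambda>x. x ! j) xs"
  have lx: "\<And>x. x \<in> set xs \<Longrightarrow> length x = n" using xs n by (metis length_map)
  have fc: "\<And>y. y \<in> set col \<Longrightarrow> fst y = vs ! j"
  proof -
    fix y assume "y \<in> set col"
    then obtain x where x: "x \<in> set xs" "y = x ! j" unfolding col_def by auto
    have "map fst x ! j = vs ! j" using xs x by simp
    thus "fst y = vs ! j" using x lx[OF x(1)] j by simp
  qed
  have cne: "col \<noteq> []" using ne by (simp add: col_def)
  have "liftop z g col = (vs ! j, g (map snd col))"
    using fc cne unfolding liftop_def by (simp add: hd_in_set)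
  moreover have "map snd col = map (\<lambda>y. y ! j) (map (map snd) xs)"
    unfolding col_def by (auto intro!: map_cong simp: lx j)
  ultimately have "liftop z g col = (vs ! j, app_op g n (map (map snd) xs) ! j)"
    using j by (simp add: app_op_nth)
  moreover have "app_op (liftop z g) n xs ! j = liftop z g col"
    using j by (simp add: app_op_nth col_def)
  ultimately show "app_op (liftop z g) n xs ! j = zip vs (app_op g n (map (map snd) xs)) ! j"
    using j n by simp
qed

lemma sum_list_zero_ereal: "\<forall>x\<in>set xs. f x = 0 \<Longrightarrow> sum_list (map f xs) = (0::ereal)"
  by (induction xs) auto

lemma E_tuple_snd:
  assumes "x \<in> tuples (D' D V T c sc) n"
  shows "map snd x \<in> tuples D n"
proof -
  have "snd p \<in> D" if "p \<in> set x" for p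
  proof -
    have "p \<in> D' D V T c sc" using assms that unfolding tuples_def by blast
    hence a: "fst p \<in> V" and b: "snd p \<in> Dv D V T c sc (fst p)" by (simp_all add: D'_mem)
    from Dv_sub[OF a] b show ?thesis by (rule subsetD)
  qed
  thus ?thesis using assms unfolding tuples_def by auto
qed

theorem lemma3p4:
  fixes D :: "'a set" and \<Gamma> :: "'a costfun set"
    and V :: "'v set" and T :: "'t set"
    and c :: "'t \<Rightarrow> 'a costfun" and sc :: "'t \<Rightarrow> 'v list"
    and m :: nat
  assumes "valid_language D \<Gamma>"
    and "vcsp_instance D \<Gamma> V T c sc"
    and "feasible_instance D V T c sc"
    and "m > 1"
    and "\<exists>\<omega>. fractional_polymorphism D \<Gamma> m \<omega> \<and> cyclic_fp D m \<omega>"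
  shows "\<exists>\<omega>'. fractional_polymorphism (D' D V T c sc) (lifted_language D V T c sc) m \<omega>'
              \<and> cyclic_fp (D' D V T c sc) m \<omega>'"
proof -
  obtain \<omega> where fp: "fractional_polymorphism D \<Gamma> m \<omega>" and cyc: "cyclic_fp D m \<omega>"
    using assms(5) by blast
  note valid = assms(1) and inst = assms(2)
  define E where "E = D' D V T c sc"
  define S where "S = supp_w \<omega>"
  define z where "z = (SOME z. z \<in> E)"
  define L where "L = liftop z"
  define \<omega>' where "\<omega>' h = sum \<omega> {g\<in>S. L g = h}" for h
  have m0: "m > 0" using assms(4) by simp
  have finS: "finite S" and pos: "\<forall>g\<in>S. \<omega> g > 0" and sum1: "sum \<omega> S = 1"
    and ops: "\<forall>g\<in>S. operation D m g" and nn: "\<forall>g. \<omega> g \<ge> 0"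
    using fp unfolding fractional_polymorphism_def S_def supp_w_def
    by (auto simp: order_le_less)
  have suppeq: "supp_w \<omega>' = L ` S"
  proof (rule set_eqI)
    fix h
    show "h \<in> supp_w \<omega>' \<longleftrightarrow> h \<in> L ` S"
    proof
      assume h: "h \<in> supp_w \<omega>'"
      show "h \<in> L ` S"
      proof (rule ccontr)
        assume "h \<notin> L ` S"
        hence "{g\<in>S. L g = h} = {}" by auto
        hence "\<omega>' h = 0" unfolding \<omega>'_def by (simp only: sum.empty)
        thus False using h unfolding supp_w_def by simp
      qed
    next
      assume "h \<in> L ` S"
      then obtain g0 where g0: "g0 \<in> S" "h = L g0" by blast
      have "\<omega>' h > 0" unfolding \<omega>'_def
        by (rule sum_pos) (use finS pos g0 in auto)
      thus "h \<in> supp_w \<omega>'" unfolding supp_w_def by simp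
    qed
  qed
  have nn': "\<forall>h. \<omega>' h \<ge> 0" unfolding \<omega>'_def using nn by (simp add: sum_nonneg)
  have sum1': "sum \<omega>' (supp_w \<omega>') = 1"
    using sum.image_gen[OF finS, of \<omega> L] sum1 unfolding suppeq \<omega>'_def by simp
  have Emem: "\<And>p. p \<in> E \<longleftrightarrow> fst p \<in> V \<and> snd p \<in> Dv D V T c sc (fst p)"
    unfolding E_def by (rule D'_mem)
  have col: "L g col = (v, g (map snd col))"
    if "col \<noteq> []" "\<forall>y\<in>set col. fst y = v" for g col v
    using that unfolding L_def liftop_def by (simp add: hd_in_set)
  have colmem: "L g col \<in> Dv' D V T c sc v"
    if g: "g \<in> S" and ne: "col \<noteq> []" and fc: "\<forall>y\<in>set col. fst y = v"
      and inE: "set col \<subseteq> E" and len: "length col = m" for g col v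
  proof -
    have h1: "hd col \<in> set col" using ne by (rule hd_in_set)
    hence "hd col \<in> E" using inE by blast
    moreover have "fst (hd col) = v" using fc h1 by blast
    ultimately have v: "v \<in> V" using Emem by blast
    have "\<forall>y\<in>set col. snd y \<in> Dv D V T c sc v"
    proof
      fix y assume y: "y \<in> set col"
      hence "y \<in> E" using inE by blast
      thus "snd y \<in> Dv D V T c sc v" using Emem fc y by simp
    qed
    hence "set (map snd col) \<subseteq> Dv D V T c sc v" by auto
    hence "g (map snd col) \<in> Dv D V T c sc v"
      using closure_Dv[OF fp _ inst m0 v, of g "map snd col"] g len unfolding S_def by simp
    thus ?thesis using col[OF ne fc] unfolding Dv'_def by simp
  qed
  have opE: "operation E m (L g)" if g: "g \<in> S" for g
    unfolding operation_def
  proof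
    fix x assume x: "x \<in> tuples E m"
    hence lx: "length x = m" and sx: "set x \<subseteq> E" unfolding tuples_def by auto
    hence ne: "x \<noteq> []" using m0 by auto
    show "L g x \<in> E"
    proof (cases "\<forall>y\<in>set x. \<forall>y'\<in>set x. fst y = fst y'")
      case True
      hence fc: "\<forall>y\<in>set x. fst y = fst (hd x)" using hd_in_set[OF ne] by blast
      have "L g x \<in> Dv' D V T c sc (fst (hd x))" by (rule colmem[OF g ne fc sx lx])
      moreover have "fst (hd x) \<in> V"
      proof -
        have "hd x \<in> E" using ne sx hd_in_set by blast
        thus ?thesis using Emem by blast
      qed
      ultimately show ?thesis unfolding E_def D'_def by blast
    next
      case False
      hence "L g x = z" unfolding L_def liftop_def by auto
      moreover have "\<exists>z. z \<in> E" using ne sx hd_in_set by blast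
      moreover have "(SOME z. z \<in> E) \<in> E" using calculation(2) by (rule someI_ex)
      ultimately show ?thesis unfolding z_def by simp
    qed
  qed
  have cycE: "cyclic_fp E m \<omega>'"
    unfolding cyclic_fp_def suppeq
  proof (intro ballI)
    fix h x assume h: "h \<in> L ` S" and x: "x \<in> tuples E m"
    then obtain g where g: "g \<in> S" "h = L g" by blast
    have lx: "length x = m" and sx: "set x \<subseteq> E" using x unfolding tuples_def by auto
    hence ne: "x \<noteq> []" using m0 by auto
    have sr: "set (rotate1 x) = set x" by simp
    have ner: "rotate1 x \<noteq> []" using ne by simp
    show "h x = h (rotate1 x)"
    proof (cases "\<forall>y\<in>set x. \<forall>y'\<in>set x. fst y = fst y'")
      case True
      hence fc: "\<forall>y\<in>set x. fst y = fst (hd x)" using hd_in_set[OF ne] by blast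
      hence fc': "\<forall>y\<in>set (rotate1 x). fst y = fst (hd x)" by simp
      have "map snd x \<in> tuples D m" using E_tuple_snd x unfolding E_def by blast
      hence "g (map snd x) = g (rotate1 (map snd x))"
        using cyc g unfolding cyclic_fp_def S_def by blast
      thus ?thesis using col[OF ne fc] col[OF ner fc'] g by (simp add: rotate1_map)
    next
      case False
      hence "\<not> (\<forall>y\<in>set (rotate1 x). \<forall>y'\<in>set (rotate1 x). fst y = fst y')" by simp
      hence "L g (rotate1 x) = z" unfolding L_def liftop_def by (simp only: if_False simp_thms)
      moreover have "L g x = z" using False unfolding L_def liftop_def by (simp only: if_False simp_thms)
      ultimately show ?thesis using g(2) by simp
    qed
  qed
  have close: "(\<Sum>h\<in>supp_w \<omega>'. ereal (\<omega>' h) * snd F (app_op h (fst F) xs))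
          \<le> ereal (1 / real m) * sum_list (map (snd F) xs)"
    if le: "(\<Sum>g\<in>S. ereal (\<omega> g) * snd F (app_op (L g) (fst F) xs))
          \<le> ereal (1 / real m) * sum_list (map (snd F) xs)"
      and fin: "\<forall>g\<in>S. \<bar>snd F (app_op (L g) (fst F) xs)\<bar> \<noteq> \<infinity>" for F xs
    using push_sum[OF finS, of "\<lambda>h. snd F (app_op h (fst F) xs)" L \<omega>] fin le
    unfolding suppeq \<omega>'_def by simp
  have zero: "(\<Sum>h\<in>supp_w \<omega>'. ereal (\<omega>' h) * snd F (app_op h (fst F) xs))
          \<le> ereal (1 / real m) * sum_list (map (snd F) xs)"
    if z1: "\<forall>g\<in>S. snd F (app_op (L g) (fst F) xs) = 0" and z2: "\<forall>x\<in>set xs. snd F x = 0" for F xs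
  proof (rule close)
    show "\<forall>g\<in>S. \<bar>snd F (app_op (L g) (fst F) xs)\<bar> \<noteq> \<infinity>" using z1 by simp
    have "sum_list (map (snd F) xs) = 0" using z2 by (rule sum_list_zero_ereal)
    moreover have "(\<Sum>g\<in>S. ereal (\<omega> g) * snd F (app_op (L g) (fst F) xs)) = 0"
      using z1 by simp
    ultimately show "(\<Sum>g\<in>S. ereal (\<omega> g) * snd F (app_op (L g) (fst F) xs))
          \<le> ereal (1 / real m) * sum_list (map (snd F) xs)" by simp
  qed
  have liftfacts:
    "(\<forall>g\<in>S. lift_fun (snd (c t)) (sc t) (app_op (L g) (fst (c t)) xs)
              = snd (c t) (app_op g (fst (c t)) (map (map snd) xs)))
     \<and> (\<forall>g\<in>S. \<bar>snd (c t) (app_op g (fst (c t)) (map (map snd) xs))\<bar> \<noteq> \<infinity>)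
     \<and> (\<Sum>g\<in>S. ereal (\<omega> g) * snd (c t) (app_op g (fst (c t)) (map (map snd) xs)))
          \<le> ereal (1 / real m) * sum_list (map (lift_fun (snd (c t)) (sc t)) xs)"
    if t: "t \<in> T" and len: "length xs = m"
      and H: "\<forall>x\<in>set xs. x \<in> tuples E (fst (c t)) \<and> lift_fun (snd (c t)) (sc t) x < \<infinity>"
    for t xs
  proof -
    define n where "n = fst (c t)"
    define f where "f = snd (c t)"
    define vs where "vs = sc t"
    define ys where "ys = map (map snd) xs"
    have ct: "c t \<in> \<Gamma>" "length vs = n"
      using inst t unfolding vcsp_instance_def vs_def n_def by auto
    have vc: "valid_costfun D (c t)" using valid ct(1) unfolding valid_language_def by blast
    have H1: "\<forall>x\<in>set xs. map fst x = vs \<and> f (map snd x) < \<infinity>"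
    proof
      fix x assume x: "x \<in> set xs"
      hence "lift_fun f vs x < \<infinity>" using H by (simp add: f_def vs_def)
      thus "map fst x = vs \<and> f (map snd x) < \<infinity>" unfolding lift_fun_def by (auto split: if_splits)
    qed
    have ysD: "\<forall>y\<in>set ys. y \<in> tuples D n \<and> f y < \<infinity>"
    proof
      fix y assume "y \<in> set ys"
      then obtain x where x: "x \<in> set xs" "y = map snd x" unfolding ys_def by auto
      have "x \<in> tuples (D' D V T c sc) n" using H x(1) unfolding E_def n_def by blast
      hence "y \<in> tuples D n" using E_tuple_snd x(2) by blast
      thus "y \<in> tuples D n \<and> f y < \<infinity>" using H1 x by blast
    qed
    have lys: "length ys = m" using len by (simp add: ys_def)
    have ne: "xs \<noteq> []" using len m0 by auto
    have eq: "lift_fun f vs (app_op (L g) n xs) = f (app_op g n ys)" for g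
    proof -
      have "app_op (L g) n xs = zip vs (app_op g n ys)"
        unfolding L_def ys_def by (rule lift_col[OF _ ct(2) ne]) (use H1 in blast)
      moreover have "map fst (zip vs (app_op g n ys)) = vs"
        "map snd (zip vs (app_op g n ys)) = app_op g n ys" using ct(2) by simp_all
      ultimately show ?thesis unfolding lift_fun_def by simp
    qed
    have fin: "\<bar>f (app_op g n ys)\<bar> \<noteq> \<infinity>" if g: "g \<in> S" for g
    proof -
      have "f (app_op g n ys) < \<infinity>"
        using fp_finite[OF fp ct(1) _ lys m0] g ysD unfolding S_def f_def n_def by blast
      moreover have "app_op g n ys \<in> tuples D n"
      proof -
        have "\<forall>j<n. map (\<lambda>y. y ! j) ys \<in> tuples D m"
          using ysD lys unfolding tuples_def by (auto simp: nth_mem subset_iff)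
        thus ?thesis using ops g unfolding tuples_def operation_def
          by (auto simp: in_set_conv_nth app_op_nth)
      qed
      moreover note tup = calculation(2)
      have "f (app_op g n ys) = \<infinity> \<or> (\<exists>q::rat. f (app_op g n ys) = ereal (of_rat q))"
        using vc tup unfolding valid_costfun_def f_def n_def by blast
      ultimately show ?thesis by auto
    qed
    have le: "(\<Sum>g\<in>S. ereal (\<omega> g) * f (app_op g n ys)) \<le> ereal (1 / real m) * sum_list (map f ys)"
      using fp ct(1) lys ysD unfolding fractional_polymorphism_def S_def f_def n_def by blast
    have "map f ys = map (lift_fun f vs) xs"
      unfolding ys_def using H1 by (auto simp: lift_fun_def)
    hence sl: "sum_list (map f ys) = sum_list (map (lift_fun f vs) xs)" by simp
    show ?thesis unfolding f_def[symmetric] n_def[symmetric] vs_def[symmetric] ys_def[symmetric]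
    proof (intro conjI)
      show "\<forall>g\<in>S. lift_fun f vs (app_op (L g) n xs) = f (app_op g n ys)" using eq by blast
      show "\<forall>g\<in>S. \<bar>f (app_op g n ys)\<bar> \<noteq> \<infinity>" by (intro ballI) (rule fin)
      show "(\<Sum>g\<in>S. ereal (\<omega> g) * f (app_op g n ys)) \<le> ereal (1 / real m) * sum_list (map (lift_fun f vs) xs)"
        using le unfolding sl .
    qed
  qed
  have ineq: "\<forall>F \<in> lifted_language D V T c sc. \<forall>xs. length xs = m \<and>
      (\<forall>x \<in> set xs. x \<in> tuples E (fst F) \<and> snd F x < \<infinity>) \<longrightarrow>
        (\<Sum>h \<in> supp_w \<omega>'. ereal (\<omega>' h) * snd F (app_op h (fst F) xs))
          \<le> ereal (1 / real m) * sum_list (map (snd F) xs)"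
  proof (intro ballI allI impI)
    fix F xs
    assume F: "F \<in> lifted_language D V T c sc"
      and A: "length xs = m \<and> (\<forall>x \<in> set xs. x \<in> tuples E (fst F) \<and> snd F x < \<infinity>)"
    have len: "length xs = m" and H: "\<forall>x \<in> set xs. x \<in> tuples E (fst F) \<and> snd F x < \<infinity>"
      using A by auto
    have ne: "xs \<noteq> []" using len m0 by auto
    from F consider
        (lift) t where "t \<in> T" "F = (fst (c t), lift_fun (snd (c t)) (sc t))"
      | (dom) t where "t \<in> T" "F = (fst (c t), dom_fun (lift_fun (snd (c t)) (sc t)))"
      | (un) v where "v \<in> V" "F = (1, unary_fun (Dv' D V T c sc v))"
      | (eq) "F = (2, eq_fun)"
      unfolding lifted_language_def by blast
    then show "(\<Sum>h \<in> supp_w \<omega>'. ereal (\<omega>' h) * snd F (app_op h (fst F) xs))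
          \<le> ereal (1 / real m) * sum_list (map (snd F) xs)"
    proof cases
      case (lift t)
      have "\<forall>x\<in>set xs. x \<in> tuples E (fst (c t)) \<and> lift_fun (snd (c t)) (sc t) x < \<infinity>"
        using H lift by simp
      from liftfacts[OF lift(1) len this] show ?thesis
        by (intro close) (simp_all add: lift)
    next
      case (dom t)
      have H': "\<forall>x\<in>set xs. x \<in> tuples E (fst (c t)) \<and> lift_fun (snd (c t)) (sc t) x < \<infinity>"
        using H dom unfolding dom_fun_def by (auto split: if_splits)
      from liftfacts[OF dom(1) len H'] have
        "\<forall>g\<in>S. lift_fun (snd (c t)) (sc t) (app_op (L g) (fst (c t)) xs) < \<infinity>"
        by (auto simp: less_top[symmetric])
      hence "\<forall>g\<in>S. snd F (app_op (L g) (fst F) xs) = 0" using dom by (simp add: dom_fun_def)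
      moreover have "\<forall>x\<in>set xs. snd F x = 0" using H' dom by (simp add: dom_fun_def)
      ultimately show ?thesis by (rule zero)
    next
      case (un v)
      have H': "\<forall>x\<in>set xs. \<exists>y. x = [y] \<and> y \<in> Dv' D V T c sc v"
        using H un unfolding unary_fun_def by (auto split: if_splits)
      have "\<forall>g\<in>S. snd F (app_op (L g) (fst F) xs) = 0"
      proof
        fix g assume g: "g \<in> S"
        define cl where "cl = map (\<lambda>x. x ! 0) xs"
        have "app_op (L g) 1 xs = [L g cl]" unfolding app_op_def cl_def by simp
        moreover have "L g cl \<in> Dv' D V T c sc v"
        proof (rule colmem[OF g])
          show "cl \<noteq> []" using ne by (simp add: cl_def)
          show "\<forall>y\<in>set cl. fst y = v" using H' unfolding cl_def Dv'_def by fastforce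
          show "set cl \<subseteq> E" using H' un unfolding cl_def E_def D'_def by fastforce
          show "length cl = m" using len by (simp add: cl_def)
        qed
        ultimately show "snd F (app_op (L g) (fst F) xs) = 0"
          using un by (simp add: unary_fun_def)
      qed
      moreover have "\<forall>x\<in>set xs. snd F x = 0" using H' un by (auto simp: unary_fun_def)
      ultimately show ?thesis by (rule zero)
    next
      case eq
      have H': "\<forall>x\<in>set xs. length x = 2 \<and> x ! 0 = x ! 1"
        using H eq unfolding eq_fun_def by (auto split: if_splits)
      have "\<forall>g\<in>S. snd F (app_op (L g) (fst F) xs) = 0"
      proof
        fix g assume g: "g \<in> S"
        have "map (\<lambda>x. x ! 0) xs = map (\<lambda>x. x ! 1) xs" using H' by (intro map_cong) auto
        moreover have "app_op (L g) 2 xs ! 0 = L g (map (\<lambda>x. x ! 0) xs)" by (rule app_op_nth) simp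
        moreover have "app_op (L g) 2 xs ! 1 = L g (map (\<lambda>x. x ! 1) xs)" by (rule app_op_nth) simp
        ultimately have "app_op (L g) 2 xs ! 0 = app_op (L g) 2 xs ! 1" by metis
        thus "snd F (app_op (L g) (fst F) xs) = 0" using eq by (simp add: eq_fun_def)
      qed
      moreover have "\<forall>x\<in>set xs. snd F x = 0" using H' eq by (auto simp: eq_fun_def)
      ultimately show ?thesis by (rule zero)
    qed
  qed
  have "fractional_polymorphism E (lifted_language D V T c sc) m \<omega>'"
    unfolding fractional_polymorphism_def
  proof (intro conjI)
    show "finite (supp_w \<omega>')" using finS suppeq by simp
    show "\<forall>g. 0 \<le> \<omega>' g" by (rule nn')
    show "sum \<omega>' (supp_w \<omega>') = 1" by (rule sum1')
    show "\<forall>g\<in>supp_w \<omega>'. operation E m g" using opE suppeq by auto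
  qed (rule ineq)
  thus ?thesis using cycE unfolding E_def by blast
qed

end
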